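(* Let $(X,d)$ be a compact doubling metric space with $\operatorname{diam}(X,d)=1/2$ and $\mathcal S$ a hyperbolic filling with parameters $a\ge\lambda\ge6$. Let $\rho:\mathcal S\to(0,\infty)$ satisfy (H1) and (H4) (exponent $p$). Let $C>1$, let $\mu_k$ be a $(C,\pi)$-balanced probability mass function on $\mathcal S_k$, and let $f_0:\mathcal S_{k+1}\to(0,1]$ be a probability mass function such that $(\mu_k,f_0)$ is $(C,\pi)$-compatible. Let $e=\{w_1,w_1'\}$ be a horizontal edge between vertices of $\mathcal S_{k+1}$ on which $f_0$ is $(C,\pi)$-unbalanced. Then $(\mu_k,B^e_{k+1}(f_0))$ is $(C,\pi)$-compatible.
   Context: Hyperbolic filling: $X_0\subset X_1\subset\cdots$ increasing, $X_n$ maximal $a^{-n}$-separated in $X$ ($X_0=\{x_0\}$); $\mathcal S_n=\{(x,n):x\in X_n\}$, $\mathcal S=\bigcup_n\mathcal S_n$, $v_0=(x_0,0)$. Each $(x,n)$, $n\ge1$, has a fixed parent $(y,n-1)$ with $d(x,y)=\min_{z\in X_{n-1}}d(x,z)$; $\mathcal D_n(v)$ = descendants of $v$ in $\mathcal S_n$; genealogy $g(v)=(v_0,\dots,v_k=v)$. $D_2$: graph distance for the graph with edges vertex–parent and horizontal edges between distinct $(x,n),(y,n)$ with $B(x,\lambda a^{-n})\cap B(y,\lambda a^{-n})\ne\emptyset$. $\pi(v)=\prod_{w\in g(v)}\rho(w)$. (H1) $0<\eta_-\le\rho\le\eta_+<1$. (H4) $\sum_{w\in\mathcal D_n(v)}\pi(w)^p\le\pi(v)^p$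 for all $v\in\mathcal S_m$, $n>m$. $f:\mathcal S_k\to(0,\infty)$ is $(C,\pi)$-balanced if $f(u)/\pi(u)^p\le C^2f(v)/\pi(v)^p$ for all $u,v\in\mathcal S_k$ with $D_2(u,v)=1$; it is $(C,\pi)$-balanced on an edge $\{u,v\}$ if $C^{-2}f(v)/\pi(v)^p\le f(u)/\pi(u)^p\le C^2f(v)/\pi(v)^p$, and $(C,\pi)$-unbalanced on it otherwise. $(f_0,f_1)$ with $f_0$ on $\mathcal S_k$, $f_1$ on $\mathcal S_{k+1}$ is $(C,\pi)$-compatible if $f_0(u)/\pi(u)^p\le f_1(v)/\pi(v)^p\le Cf_0(u)/\pi(u)^p$ whenever $u$ is the parent of $v$. Balancing operator: for a horizontal edge $e=\{u,v\}$ in $\mathcal S_j$ and $f:\mathcal S_j\to(0,\infty)$, $B^e_j(f)=f$ if $f$ is balanced on $e$; if $f(u)/\pi(u)^p>C^2f(v)/\pi(v)^p$, then $B^e_j(f)$ agrees with $f$ off $\{u,v\}$ and equals $f(u)-\alpha$ at $u$, $f(v)+\alpha$ at $v$, where $\alpha(C^2/\pi(v)^p+1/\pi(u)^p)=f(u)/\pi(u)^p-C^2f(v)/\pi(v)^p$; symmetrically with $u,v$ exchanged if $f(v)/\pi(v)^p>C^2f(u)/\pi(u)^p$. *)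

theory Defs
  imports "HOL-Analysis.Analysis"
begin

type_synonym 'a vertex = "'a \<times> nat"

definition doubling :: "'a::metric_space set \<Rightarrow> bool" where
  "doubling X \<longleftrightarrow> (\<exists>N::nat. \<forall>x\<in>X. \<forall>r>0. \<exists>F. F \<subseteq> X \<and> finite F \<and> card F \<le> N \<and>
      X \<inter> ball x (2*r) \<subseteq> (\<Union>y\<in>F. ball y r))"

definition separated :: "real \<Rightarrow> 'a::metric_space set \<Rightarrow> bool" where
  "separated eps Y \<longleftrightarrow> (\<forall>x\<in>Y. \<forall>y\<in>Y. x \<noteq> y \<longrightarrow> dist x y \<ge> eps)"

definition maximal_separated :: "real \<Rightarrow> 'a::metric_space set \<Rightarrow> 'a set \<Rightarrow> bool" where
  "maximal_separated eps Y X \<longleftrightarrow> Y \<subseteq> X \<and> separated eps Y \<and>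
     (\<forall>Z. Y \<subset> Z \<and> Z \<subseteq> X \<longrightarrow> \<not> separated eps Z)"

definition Slev :: "(nat \<Rightarrow> 'a set) \<Rightarrow> nat \<Rightarrow> 'a vertex set" where
  "Slev Xs n = {(x, n) | x. x \<in> Xs n}"

definition Sall :: "(nat \<Rightarrow> 'a set) \<Rightarrow> 'a vertex set" where
  "Sall Xs = (\<Union>n. Slev Xs n)"

definition hyperbolic_filling ::
  "'a::metric_space set \<Rightarrow> real \<Rightarrow> (nat \<Rightarrow> 'a set) \<Rightarrow> 'a \<Rightarrow> ('a vertex \<Rightarrow> 'a vertex) \<Rightarrow> bool" where
  "hyperbolic_filling X a Xs x0 par \<longleftrightarrow>
     Xs 0 = {x0} \<and> (\<forall>n. Xs n \<subseteq> Xs (Suc n)) \<and>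
     (\<forall>n. maximal_separated (1 / a ^ n) (Xs n) X) \<and>
     (\<forall>n. \<forall>x\<in>Xs (Suc n). \<exists>y\<in>Xs n. par (x, Suc n) = (y, n) \<and>
          (\<forall>z\<in>Xs n. dist x y \<le> dist x z))"

definition genealogy :: "('a vertex \<Rightarrow> 'a vertex) \<Rightarrow> 'a vertex \<Rightarrow> 'a vertex set" where
  "genealogy par v = {(par ^^ i) v | i. i \<le> snd v}"

definition piw :: "('a vertex \<Rightarrow> 'a vertex) \<Rightarrow> ('a vertex \<Rightarrow> real) \<Rightarrow> 'a vertex \<Rightarrow> real" where
  "piw par rho v = (\<Prod>w\<in>genealogy par v. rho w)"

definition Desc :: "(nat \<Rightarrow> 'a set) \<Rightarrow> ('a vertex \<Rightarrow> 'a vertex) \<Rightarrow> nat \<Rightarrow> 'a vertex \<Rightarrow> 'a vertex set" where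
  "Desc Xs par n v = {w \<in> Slev Xs n. (par ^^ (n - snd v)) w = v}"

definition H1 :: "(nat \<Rightarrow> 'a set) \<Rightarrow> ('a vertex \<Rightarrow> real) \<Rightarrow> bool" where
  "H1 Xs rho \<longleftrightarrow> (\<exists>em ep. 0 < em \<and> em \<le> ep \<and> ep < 1 \<and>
       (\<forall>v\<in>Sall Xs. em \<le> rho v \<and> rho v \<le> ep))"

definition H4 :: "(nat \<Rightarrow> 'a set) \<Rightarrow> ('a vertex \<Rightarrow> 'a vertex) \<Rightarrow> ('a vertex \<Rightarrow> real) \<Rightarrow> real \<Rightarrow> bool" where
  "H4 Xs par rho p \<longleftrightarrow> (\<forall>m n v. v \<in> Slev Xs m \<longrightarrow> m < n \<longrightarrow>
       (\<Sum>w\<in>Desc Xs par n v. piw par rho w powr p) \<le> piw par rho v powr p)"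

text \<open>Horizontal edges and the edges of the graph defining D_2 (D_2(u,v) = 1 iff adjacent).\<close>
definition horiz_edge ::
  "'a::metric_space set \<Rightarrow> real \<Rightarrow> real \<Rightarrow> (nat \<Rightarrow> 'a set) \<Rightarrow> 'a vertex \<Rightarrow> 'a vertex \<Rightarrow> bool" where
  "horiz_edge X a lam Xs u v \<longleftrightarrow> u \<noteq> v \<and> snd u = snd v \<and> u \<in> Slev Xs (snd u) \<and> v \<in> Slev Xs (snd v) \<and>
      X \<inter> ball (fst u) (lam / a ^ snd u) \<inter> ball (fst v) (lam / a ^ snd v) \<noteq> {}"

definition D2_adj ::
  "'a::metric_space set \<Rightarrow> real \<Rightarrow> real \<Rightarrow> (nat \<Rightarrow> 'a set) \<Rightarrow> ('a vertex \<Rightarrow> 'a vertex) \<Rightarrow> 'a vertex \<Rightarrow> 'a vertex \<Rightarrow> bool" where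
  "D2_adj X a lam Xs par u v \<longleftrightarrow> u \<in> Sall Xs \<and> v \<in> Sall Xs \<and> u \<noteq> v \<and>
     ((0 < snd u \<and> par u = v) \<or> (0 < snd v \<and> par v = u) \<or> horiz_edge X a lam Xs u v)"

definition ratio :: "('a vertex \<Rightarrow> 'a vertex) \<Rightarrow> ('a vertex \<Rightarrow> real) \<Rightarrow> real \<Rightarrow> ('a vertex \<Rightarrow> real) \<Rightarrow> 'a vertex \<Rightarrow> real" where
  "ratio par rho p f u = f u / piw par rho u powr p"

definition balanced ::
  "'a::metric_space set \<Rightarrow> real \<Rightarrow> real \<Rightarrow> (nat \<Rightarrow> 'a set) \<Rightarrow> ('a vertex \<Rightarrow> 'a vertex) \<Rightarrow> ('a vertex \<Rightarrow> real)
    \<Rightarrow> real \<Rightarrow> real \<Rightarrow> nat \<Rightarrow> ('a vertex \<Rightarrow> real) \<Rightarrow> bool" where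
  "balanced X a lam Xs par rho p C k f \<longleftrightarrow> (\<forall>u\<in>Slev Xs k. f u > 0) \<and>
     (\<forall>u\<in>Slev Xs k. \<forall>v\<in>Slev Xs k. D2_adj X a lam Xs par u v \<longrightarrow>
        ratio par rho p f u \<le> C^2 * ratio par rho p f v)"

definition balanced_on_edge ::
  "('a vertex \<Rightarrow> 'a vertex) \<Rightarrow> ('a vertex \<Rightarrow> real) \<Rightarrow> real \<Rightarrow> real \<Rightarrow> ('a vertex \<Rightarrow> real) \<Rightarrow> 'a vertex \<Rightarrow> 'a vertex \<Rightarrow> bool" where
  "balanced_on_edge par rho p C f u v \<longleftrightarrow>
     C powr (-2) * ratio par rho p f v \<le> ratio par rho p f u \<and> ratio par rho p f u \<le> C^2 * ratio par rho p f v"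

definition compatible ::
  "(nat \<Rightarrow> 'a set) \<Rightarrow> ('a vertex \<Rightarrow> 'a vertex) \<Rightarrow> ('a vertex \<Rightarrow> real) \<Rightarrow> real \<Rightarrow> real \<Rightarrow> nat
    \<Rightarrow> ('a vertex \<Rightarrow> real) \<Rightarrow> ('a vertex \<Rightarrow> real) \<Rightarrow> bool" where
  "compatible Xs par rho p C k f0 f1 \<longleftrightarrow>
     (\<forall>u\<in>Slev Xs k. \<forall>v\<in>Slev Xs (Suc k). par v = u \<longrightarrow>
        ratio par rho p f0 u \<le> ratio par rho p f1 v \<and> ratio par rho p f1 v \<le> C * ratio par rho p f0 u)"

definition pmf_on :: "'a vertex set \<Rightarrow> ('a vertex \<Rightarrow> real) \<Rightarrow> bool" where
  "pmf_on A f \<longleftrightarrow> (\<forall>v\<in>A. f v > 0) \<and> sum f A = 1"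

definition balance_op ::
  "('a vertex \<Rightarrow> 'a vertex) \<Rightarrow> ('a vertex \<Rightarrow> real) \<Rightarrow> real \<Rightarrow> real \<Rightarrow> 'a vertex \<Rightarrow> 'a vertex
    \<Rightarrow> ('a vertex \<Rightarrow> real) \<Rightarrow> ('a vertex \<Rightarrow> real)" where
  "balance_op par rho p C u v f =
     (let pu = piw par rho u powr p; pv = piw par rho v powr p in
      if f u / pu > C^2 * f v / pv then
        (let \<alpha> = (f u / pu - C^2 * f v / pv) / (C^2 / pv + 1 / pu) in f(u := f u - \<alpha>, v := f v + \<alpha>))
      else if f v / pv > C^2 * f u / pu then
        (let \<alpha> = (f v / pv - C^2 * f u / pu) / (C^2 / pu + 1 / pv) in f(v := f v - \<alpha>, u := f u + \<alpha>))
      else f)"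

end

theory Submission
  imports Defs
begin

lemma near_point:
  assumes "maximal_separated eps Y X" "x \<in> X" "eps > 0"
  shows "\<exists>y\<in>Y. dist x y < eps"
proof (rule ccontr)
  assume H: "\<not> ?thesis"
  hence xY: "x \<notin> Y" using assms(3) by force
  have "Y \<subset> insert x Y" using xY by blast
  moreover have "insert x Y \<subseteq> X" using assms unfolding maximal_separated_def by auto
  moreover have "separated eps (insert x Y)"
    using assms(1) H unfolding maximal_separated_def separated_def
    by (auto simp: dist_commute not_less)
  ultimately show False using assms(1) unfolding maximal_separated_def by blast
qed

lemma parent_close:
  assumes hf: "hyperbolic_filling X a Xs x0 par" and a: "a > 0"
    and x: "x \<in> Xs (Suc k)"
  shows "\<exists>y\<in>Xs k. par (x, Suc k) = (y, k) \<and> dist x y < 1 / a ^ k \<and> x \<in> X"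
proof -
  have ms: "\<And>n. maximal_separated (1 / a ^ n) (Xs n) X" using hf unfolding hyperbolic_filling_def by blast
  have xX: "x \<in> X" using ms[of "Suc k"] x unfolding maximal_separated_def by blast
  obtain y where y: "y \<in> Xs k" "par (x, Suc k) = (y, k)" "\<forall>z\<in>Xs k. dist x y \<le> dist x z"
    using hf x unfolding hyperbolic_filling_def by blast
  obtain z where z: "z \<in> Xs k" "dist x z < 1 / a ^ k" using near_point[OF ms[of k] xX] a by auto
  show ?thesis using y z xX by force
qed

lemma parent_adj:
  assumes hf: "hyperbolic_filling X a Xs x0 par" and l: "6 \<le> lam" "lam \<le> a"
    and he: "horiz_edge X a lam Xs w w'"
    and w: "w \<in> Slev Xs (Suc k)" and w': "w' \<in> Slev Xs (Suc k)"
  shows "par w \<in> Slev Xs k \<and> par w' \<in> Slev Xs k \<and>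
    (par w = par w' \<or> D2_adj X a lam Xs par (par w) (par w'))"
proof -
  have a: "a > 0" using l by linarith
  obtain x where x: "w = (x, Suc k)" "x \<in> Xs (Suc k)" using w unfolding Slev_def by blast
  obtain x' where x': "w' = (x', Suc k)" "x' \<in> Xs (Suc k)" using w' unfolding Slev_def by blast
  obtain y where y: "y \<in> Xs k" "par w = (y, k)" "dist x y < 1 / a ^ k"
    using parent_close[OF hf a x(2)] x by auto
  obtain y' where y': "y' \<in> Xs k" "par w' = (y', k)" "dist x' y' < 1 / a ^ k"
    using parent_close[OF hf a x'(2)] x' by auto
  obtain z where z: "z \<in> X" "dist x z < lam / a ^ Suc k" "dist x' z < lam / a ^ Suc k"
    using he x x' unfolding horiz_edge_def by (auto simp: dist_commute)
  have ak: "a ^ k > 0" using a by simp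
  have e1: "lam / a ^ Suc k \<le> 1 / a ^ k"
  proof -
    have "lam / a ^ Suc k = (lam / a) / a ^ k" by simp
    also have "\<dots> \<le> 1 / a ^ k" using l a ak by (intro divide_right_mono) auto
    finally show ?thesis .
  qed
  have e2: "2 / a ^ k \<le> lam / a ^ k" using l ak by (intro divide_right_mono) auto
  have d1: "dist y z < lam / a ^ k"
    using dist_triangle[of y z x] y(3) z(2) e1 e2 by (simp add: dist_commute)
  have d2: "dist y' z < lam / a ^ k"
    using dist_triangle[of y' z x'] y'(3) z(3) e1 e2 by (simp add: dist_commute)
  have S1: "par w \<in> Slev Xs k" "par w' \<in> Slev Xs k" using y y' unfolding Slev_def by auto
  show ?thesis
  proof (cases "par w = par w'")
    case False
    have "horiz_edge X a lam Xs (par w) (par w')"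
      unfolding horiz_edge_def using False S1 y y' z d1 d2 by (auto simp: dist_commute)
    then have "D2_adj X a lam Xs par (par w) (par w')"
      unfolding D2_adj_def Sall_def using S1 False by blast
    then show ?thesis using S1 by blast
  qed (use S1 in auto)
qed

lemma anc_in:
  assumes hf: "hyperbolic_filling X a Xs x0 par" and v: "v \<in> Slev Xs n" and i: "i \<le> n"
  shows "(par ^^ i) v \<in> Slev Xs (n - i)"
  using i
proof (induction i)
  case 0 then show ?case using v by simp
next
  case (Suc i)
  then have IH: "(par ^^ i) v \<in> Slev Xs (n - i)" by simp
  obtain m where m: "n - i = Suc m" "n - Suc i = m" using Suc.prems by (intro that[of "n - Suc i"]) auto
  obtain x where x: "(par ^^ i) v = (x, Suc m)" "x \<in> Xs (Suc m)" using IH m unfolding Slev_def by auto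
  obtain y where "y \<in> Xs m" "par (x, Suc m) = (y, m)"
    using hf x(2) unfolding hyperbolic_filling_def by blast
  then show ?case using x m by (simp add: Slev_def)
qed

lemma piw_pos:
  assumes hf: "hyperbolic_filling X a Xs x0 par" and rp: "\<forall>v\<in>Sall Xs. rho v > 0"
    and v: "v \<in> Slev Xs n"
  shows "piw par rho v powr p > 0"
proof -
  have sv: "snd v = n" using v unfolding Slev_def by auto
  have g: "genealogy par v = (\<lambda>i. (par ^^ i) v) ` {..snd v}" unfolding genealogy_def by auto
  have "\<forall>w\<in>genealogy par v. rho w > 0"
  proof
    fix w assume "w \<in> genealogy par v"
    then obtain i where "i \<le> n" "w = (par ^^ i) v" using g sv by auto
    then have "w \<in> Sall Xs" using anc_in[OF hf v] unfolding Sall_def by blast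
    then show "rho w > 0" using rp by blast
  qed
  then have "piw par rho v > 0" unfolding piw_def by (intro prod_pos) auto
  then show ?thesis by simp
qed

lemma core:
  fixes fu fv Pu Pv C mU mV :: real
  assumes Pu: "Pu > 0" and Pv: "Pv > 0" and C: "C > 1"
    and gt: "fu / Pu > C^2 * fv / Pv"
    and al: "al = (fu / Pu - C^2 * fv / Pv) / (C^2 / Pv + 1 / Pu)"
    and u1: "mU \<le> fu / Pu" and u2: "fu / Pu \<le> C * mU"
    and v1: "mV \<le> fv / Pv" and v2: "fv / Pv \<le> C * mV"
    and uv: "mU \<le> C^2 * mV"
  shows "mU \<le> (fu - al) / Pu \<and> (fu - al) / Pu \<le> C * mU \<and>
         mV \<le> (fv + al) / Pv \<and> (fv + al) / Pv \<le> C * mV"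
proof -
  define ru rv c where "ru = fu / Pu" and "rv = fv / Pv" and "c = C^2"
  have c1: "c > 1" using C unfolding c_def by (simp add: one_less_power)
  have den: "c / Pv + 1 / Pu > 0" using Pu Pv c1 by (simp add: add_pos_pos)
  have gt': "ru > c * rv" using gt unfolding ru_def rv_def c_def by simp
  have alpos: "al > 0" using al gt' den unfolding ru_def rv_def c_def by simp
  define t s where "t = al / Pu" and "s = al / Pv"
  have tp: "t > 0" "s > 0" using alpos Pu Pv unfolding t_def s_def by auto
  have eq1: "(fu - al) / Pu = ru - t" unfolding ru_def t_def by (simp add: diff_divide_distrib)
  have eq2: "(fv + al) / Pv = rv + s" unfolding rv_def s_def by (simp add: add_divide_distrib)
  have "al * (c / Pv + 1 / Pu) = ru - c * rv" using al den unfolding ru_def rv_def c_def by simp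
  then have key: "ru - t = c * (rv + s)" unfolding t_def s_def by (simp add: algebra_simps)
  have "mU \<le> c * mV" using uv c_def by simp
  also have "\<dots> \<le> c * rv" using v1 c1 unfolding rv_def[symmetric] by simp
  also have "\<dots> \<le> c * (rv + s)" using tp c1 by simp
  finally have A: "mU \<le> ru - t" using key by simp
  have B: "ru - t \<le> C * mU" using u2 tp unfolding ru_def by simp
  have Cc: "mV \<le> rv + s" using v1 tp unfolding rv_def by simp
  have "c * (rv + s) \<le> C * mU" using key B by simp
  also have "\<dots> \<le> C * (c * mV)" using uv C c_def by simp
  finally have "c * (rv + s) \<le> c * (C * mV)" by (simp add: algebra_simps)
  then have D: "rv + s \<le> C * mV" using c1 by simp
  show ?thesis using A B Cc D eq1 eq2 unfolding ru_def rv_def by simp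
qed

lemma D2_adj_sym: "D2_adj X a lam Xs par u v \<Longrightarrow> D2_adj X a lam Xs par v u"
  unfolding D2_adj_def horiz_edge_def by (auto simp: Int_commute Int_left_commute)

theorem lemma3p12:
  fixes X :: "'a::metric_space set" and a lam :: real and Xs :: "nat \<Rightarrow> 'a set" and x0 :: 'a
    and par :: "'a \<times> nat \<Rightarrow> 'a \<times> nat" and rho :: "'a \<times> nat \<Rightarrow> real" and p C :: real and k :: nat
    and mu f0 :: "'a \<times> nat \<Rightarrow> real" and w1 w1' :: "'a \<times> nat"
  assumes "compact X" and "doubling X" and "diameter X = 1/2"
    and "6 \<le> lam" and "lam \<le> a"
    and "hyperbolic_filling X a Xs x0 par"
    and "\<forall>v\<in>Sall Xs. rho v > 0"
    and "H1 Xs rho" and "H4 Xs par rho p"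
    and "C > 1"
    and "pmf_on (Slev Xs k) mu" and "balanced X a lam Xs par rho p C k mu"
    and "pmf_on (Slev Xs (Suc k)) f0" and "\<forall>v\<in>Slev Xs (Suc k). f0 v \<le> 1"
    and "compatible Xs par rho p C k mu f0"
    and "w1 \<in> Slev Xs (Suc k)" and "w1' \<in> Slev Xs (Suc k)"
    and "horiz_edge X a lam Xs w1 w1'"
    and "\<not> balanced_on_edge par rho p C f0 w1 w1'"
  shows "compatible Xs par rho p C k mu (balance_op par rho p C w1 w1' f0)"
proof -
  note hf = assms(6)
  define P where "P x = piw par rho x powr p" for x
  define u where "u = w1"
  define v where "v = w1'"
  define g where "g = balance_op par rho p C w1 w1' f0"
  define mU where "mU = ratio par rho p mu (par u)"
  define mV where "mV = ratio par rho p mu (par v)"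
  have uS: "u \<in> Slev Xs (Suc k)" and vS: "v \<in> Slev Xs (Suc k)" using assms u_def v_def by auto
  have uv: "u \<noteq> v" using assms(18) unfolding horiz_edge_def u_def v_def by auto
  have Pu: "P u > 0" and Pv: "P v > 0" unfolding P_def using piw_pos[OF hf assms(7)] uS vS by auto
  have pa: "par u \<in> Slev Xs k \<and> par v \<in> Slev Xs k \<and>
    (par u = par v \<or> D2_adj X a lam Xs par (par u) (par v))"
    using parent_adj[OF hf assms(4,5) assms(18,16,17)] u_def v_def by simp
  have muU: "mu (par u) > 0" using assms(11) pa unfolding pmf_on_def by auto
  have PU: "P (par u) > 0" unfolding P_def using piw_pos[OF hf assms(7), of "par u" k] pa by blast
  have mUpos: "mU > 0" using muU PU unfolding mU_def ratio_def P_def by simp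
  have muV: "mu (par v) > 0" using assms(11) pa unfolding pmf_on_def by auto
  have PV: "P (par v) > 0" unfolding P_def using piw_pos[OF hf assms(7), of "par v" k] pa by blast
  have mVpos: "mV > 0" using muV PV unfolding mV_def ratio_def P_def by simp
  have C2: "C^2 \<ge> 1" using assms(10) by (simp add: one_le_power)
  have UV: "mU \<le> C^2 * mV \<and> mV \<le> C^2 * mU"
  proof (cases "par u = par v")
    case True
    then have "mU = mV" unfolding mU_def mV_def by simp
    then show ?thesis using mUpos C2 by (simp add: mult_le_cancel_right1)
  next
    case False
    then have d: "D2_adj X a lam Xs par (par u) (par v)" using pa by blast
    show ?thesis using assms(12) pa d D2_adj_sym[OF d] unfolding balanced_def mU_def mV_def by blast
  qed
  have cu: "mU \<le> f0 u / P u \<and> f0 u / P u \<le> C * mU"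
    using assms(15) pa uS unfolding compatible_def mU_def ratio_def P_def by blast
  have cv: "mV \<le> f0 v / P v \<and> f0 v / P v \<le> C * mV"
    using assms(15) pa vS unfolding compatible_def mV_def ratio_def P_def by blast
  have gu: "mU \<le> g u / P u \<and> g u / P u \<le> C * mU \<and> mV \<le> g v / P v \<and> g v / P v \<le> C * mV
     \<and> (\<forall>w. w \<noteq> u \<and> w \<noteq> v \<longrightarrow> g w = f0 w)"
  proof (cases "f0 u / P u > C^2 * f0 v / P v")
    case True
    define al where "al = (f0 u / P u - C^2 * f0 v / P v) / (C^2 / P v + 1 / P u)"
    have g: "g = f0(u := f0 u - al, v := f0 v + al)"
      unfolding g_def balance_op_def Let_def al_def using True
      by (simp add: P_def u_def v_def)
    show ?thesis using core[OF Pu Pv assms(10) True al_def] cu cv UV g uv by auto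
  next
    case False
    show ?thesis
    proof (cases "f0 v / P v > C^2 * f0 u / P u")
      case True2: True
      define al where "al = (f0 v / P v - C^2 * f0 u / P u) / (C^2 / P u + 1 / P v)"
      have g: "g = f0(v := f0 v - al, u := f0 u + al)"
        unfolding g_def balance_op_def Let_def al_def using True2 False
        by (simp add: P_def u_def v_def)
      show ?thesis using core[OF Pv Pu assms(10) True2 al_def] cu cv UV g uv by auto
    next
      case False2: False
      have g: "g = f0"
        unfolding g_def balance_op_def Let_def using False2 False
        by (simp add: P_def u_def v_def)
      show ?thesis using cu cv g by auto
    qed
  qed
  show ?thesis
    unfolding compatible_def g_def[symmetric]
  proof (intro ballI impI)
    fix U w assume U: "U \<in> Slev Xs k" and w: "w \<in> Slev Xs (Suc k)" and pw: "par w = U"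
    show "ratio par rho p mu U \<le> ratio par rho p g w \<and> ratio par rho p g w \<le> C * ratio par rho p mu U"
    proof (cases "w = u \<or> w = v")
      case True
      then show ?thesis using gu pw unfolding mU_def mV_def ratio_def P_def by auto
    next
      case False
      then have "g w = f0 w" using gu by blast
      then show ?thesis using assms(15) U w pw unfolding compatible_def ratio_def by auto
    qed
  qed
qed

end
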